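(* For every allocation $\mathcal{E}=(E_1,\dots,E_M)\in\mathfrak{E}$ let $V(\mathcal{E})$ denote the optimal value of the parametric problem $\mathcal{P}(\mathcal{E})$ described in the context. Then $V$ is convex on $\mathfrak{E}$: for all $\lambda\in[0,1]$ and all $\mathcal{E}_1,\mathcal{E}_2\in\mathfrak{E}$, $V(\lambda\mathcal{E}_1+(1-\lambda)\mathcal{E}_2)\le\lambda V(\mathcal{E}_1)+(1-\lambda)V(\mathcal{E}_2)$.
   Context: Data: integers $N\ge1$, $M\ge1$, $T>0$, $E>0$, constants $\alpha>0,\beta$, $L<U$, $x_{i0}\in[L,U]$ ($i\in[N]:=\{1,\dots,N\}$), a price $\pi:[0,T]\to\mathbb{R}$, a constant ambient temperature $\hat{x}>U$. Let $0=\tau_0<\tau_1<\dots<\tau_M=T$ be the partition of $[0,T]$ into the subintervals on which $\pi$ is monotone, $T_j:=\tau_j-\tau_{j-1}$. Let $\overline{u}:=\frac\alpha\beta(\hat{x}-U)$, $\underline{u}:=\frac\alpha\beta(\hat{x}-L)$, $t^0:=\frac1\alpha\log\frac{\hat{x}-L}{\hat{x}-U}$, $t^1:=\frac1\alpha\log\frac{U-\hat{x}+\beta/\alpha}{L-\hat{x}+\beta/\alpha}$, $\overline{E}_j:=N\overline{u}[T_j-t^0]^+$, $\underline{E}_j:=N\{\min(t^1,T_j)+\underline{u}[T_j-t^1]^+\}$, where $[s]^+=\max\{0,s\}$. The admissible allocations are $\mathfrak{E}:=\{(E_1,\dots,E_M)\in\mathbb{R}^M_+:\sum_jE_j=E,\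 E_j\in[\overline{E}_j,\underline{E}_j]\ \forall j\}$. Problem $\mathcal{P}(\mathcal{E})$: over measurable $u_i:[0,T]\to[0,1]$, minimize $J(\mathbf{u})=\int_0^T\pi(t)\sum_{i=1}^Nu_i(t)dt$ subject to $\dot{x}_i=-\alpha(x_i-\hat{x})-\beta u_i$ a.e., $x_i(0)=x_{i0}$, $L\le x_i(t)\le U$ for all $t$ ($i\in[N]$), $\dot{x}_{N+1}=\sum_iu_i$ a.e., $x_{N+1}(0)=0$, and $x_{N+1}(\tau_j)=E_1+\dots+E_j$ for $j=1,\dots,M$. $V(\mathcal{E})$ is the minimum (infimum) of $J$ over feasible controls. *)

theory Defs
  imports "HOL-Analysis.Analysis" "HOL-Library.Extended_Real"
begin

definition pos_part :: "real \<Rightarrow> real" where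
  "pos_part s = max 0 s"

definition Tlen :: "(nat \<Rightarrow> real) \<Rightarrow> nat \<Rightarrow> real" where
  "Tlen \<tau> j = \<tau> j - \<tau> (j - 1)"

definition ubar :: "real \<Rightarrow> real \<Rightarrow> real \<Rightarrow> real \<Rightarrow> real" where
  "ubar \<alpha> \<beta> xh U = \<alpha> / \<beta> * (xh - U)"

definition uund :: "real \<Rightarrow> real \<Rightarrow> real \<Rightarrow> real \<Rightarrow> real" where
  "uund \<alpha> \<beta> xh L = \<alpha> / \<beta> * (xh - L)"

definition t0 :: "real \<Rightarrow> real \<Rightarrow> real \<Rightarrow> real \<Rightarrow> real" where
  "t0 \<alpha> xh L U = 1 / \<alpha> * ln ((xh - L) / (xh - U))"

definition t1 :: "real \<Rightarrow> real \<Rightarrow> real \<Rightarrow> real \<Rightarrow> real \<Rightarrow> real" where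
  "t1 \<alpha> \<beta> xh L U = 1 / \<alpha> * ln ((U - xh + \<beta> / \<alpha>) / (L - xh + \<beta> / \<alpha>))"

definition Ebar :: "nat \<Rightarrow> real \<Rightarrow> real \<Rightarrow> real \<Rightarrow> real \<Rightarrow> real \<Rightarrow> (nat \<Rightarrow> real) \<Rightarrow> nat \<Rightarrow> real" where
  "Ebar N \<alpha> \<beta> xh L U \<tau> j =
     real N * ubar \<alpha> \<beta> xh U * pos_part (Tlen \<tau> j - t0 \<alpha> xh L U)"

definition Eund :: "nat \<Rightarrow> real \<Rightarrow> real \<Rightarrow> real \<Rightarrow> real \<Rightarrow> real \<Rightarrow> (nat \<Rightarrow> real) \<Rightarrow> nat \<Rightarrow> real" where
  "Eund N \<alpha> \<beta> xh L U \<tau> j =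
     real N * (min (t1 \<alpha> \<beta> xh L U) (Tlen \<tau> j)
               + uund \<alpha> \<beta> xh L * pos_part (Tlen \<tau> j - t1 \<alpha> \<beta> xh L U))"

text \<open>Admissible allocations (E_1,...,E_M), represented by their values at indices 1..M.\<close>
definition Adm :: "nat \<Rightarrow> nat \<Rightarrow> real \<Rightarrow> real \<Rightarrow> real \<Rightarrow> real \<Rightarrow> real \<Rightarrow> real \<Rightarrow> (nat \<Rightarrow> real)
                   \<Rightarrow> (nat \<Rightarrow> real) set" where
  "Adm N M Etot \<alpha> \<beta> xh L U \<tau> =
     {E. (\<forall>j\<in>{1..M}. 0 \<le> E j \<and> Ebar N \<alpha> \<beta> xh L U \<tau> j \<le> E j \<and> E j \<le> Eund N \<alpha> \<beta> xh L U \<tau> j)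
         \<and> (\<Sum>j=1..M. E j) = Etot}"

text \<open>The state equations are
  understood in the Caratheodory (integral) sense: x_i is continuous and
  x_i(t) = x_i0 + int_0^t (-alpha (x_i - xh) - beta u_i).  The energy state x_{N+1}
  is x_{N+1}(t) = int_0^t sum_i u_i.\<close>
definition feasible ::
  "nat \<Rightarrow> nat \<Rightarrow> real \<Rightarrow> real \<Rightarrow> real \<Rightarrow> real \<Rightarrow> real \<Rightarrow> real \<Rightarrow> (nat \<Rightarrow> real)
   \<Rightarrow> (nat \<Rightarrow> real) \<Rightarrow> (nat \<Rightarrow> real) \<Rightarrow> (nat \<Rightarrow> real \<Rightarrow> real) \<Rightarrow> bool" where
  "feasible N M T \<alpha> \<beta> xh L U x0 \<tau> E u \<longleftrightarrow>
     (\<forall>i\<in>{1..N}.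
        u i \<in> borel_measurable (lebesgue_on {0..T})
      \<and> (\<forall>t\<in>{0..T}. 0 \<le> u i t \<and> u i t \<le> 1)
      \<and> (\<exists>x :: real \<Rightarrow> real. continuous_on {0..T} x
           \<and> (\<forall>t\<in>{0..T}. x t = x0 i + integral {0..t} (\<lambda>s. - \<alpha> * (x s - xh) - \<beta> * u i s))
           \<and> (\<forall>t\<in>{0..T}. L \<le> x t \<and> x t \<le> U)))
   \<and> (\<forall>j\<in>{1..M}. integral {0..\<tau> j} (\<lambda>t. \<Sum>i=1..N. u i t) = (\<Sum>k=1..j. E k))"

definition cost :: "nat \<Rightarrow> real \<Rightarrow> (real \<Rightarrow> real) \<Rightarrow> (nat \<Rightarrow> real \<Rightarrow> real) \<Rightarrow> real" where
  "cost N T \<pi> u = integral {0..T} (\<lambda>t. \<pi> t * (\<Sum>i=1..N. u i t))"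

text \<open>Optimal value (infimum; +infinity if infeasible).\<close>
definition Vopt ::
  "nat \<Rightarrow> nat \<Rightarrow> real \<Rightarrow> real \<Rightarrow> real \<Rightarrow> real \<Rightarrow> real \<Rightarrow> real \<Rightarrow> (nat \<Rightarrow> real)
   \<Rightarrow> (real \<Rightarrow> real) \<Rightarrow> (nat \<Rightarrow> real) \<Rightarrow> (nat \<Rightarrow> real) \<Rightarrow> ereal" where
  "Vopt N M T \<alpha> \<beta> xh L U x0 \<pi> \<tau> E =
     (INF u \<in> {u. feasible N M T \<alpha> \<beta> xh L U x0 \<tau> E u}. ereal (cost N T \<pi> u))"

end

theory Submission
  imports Defs
begin


lemma tau_mono:
  fixes \<tau> :: "nat \<Rightarrow> real"
  assumes "\<forall>j\<in>{1..M}. \<tau> (j - 1) < \<tau> j" "i \<le> j" "j \<le> M"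
  shows "\<tau> i \<le> \<tau> j"
  using assms(2,3)
proof (induction j)
  case 0 then show ?case by simp
next
  case (Suc j)
  have "\<tau> j < \<tau> (Suc j)" using assms(1) Suc.prems by (metis atLeastAtMost_iff diff_Suc_1 le_add1 plus_1_eq_Suc)
  then show ?case using Suc by (cases "i = Suc j") auto
qed

lemma bdd_int:
  fixes g :: "real \<Rightarrow> real"
  assumes "g \<in> borel_measurable (lebesgue_on {a..b})" "\<forall>t\<in>{a..b}. \<bar>g t\<bar> \<le> B"
  shows "g integrable_on {a..b}"
  by (rule measurable_bounded_by_integrable_imp_integrable[where g="\<lambda>_. B"]) (use assms in auto)

lemma mono_meas:
  fixes f :: "real \<Rightarrow> real"
  assumes "mono_on {a..b} f"
  shows "f \<in> borel_measurable (lebesgue_on {a..b})"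
proof -
  have "space lborel = space lebesgue" "sets borel \<subseteq> sets lebesgue"
    by force+
  then show ?thesis
    by (metis assms borel_measurable_mono_on_fnc borel_measurable_subalgebra mono_restrict_space space_lborel space_restrict_space)
qed

lemma piece_meas:
  fixes f :: "real \<Rightarrow> real"
  assumes "mono_on {a..b} f \<or> antimono_on {a..b} f"
  shows "f \<in> borel_measurable (lebesgue_on {a..b}) \<and> (\<forall>t\<in>{a..b}. \<bar>f t\<bar> \<le> \<bar>f a\<bar> + \<bar>f b\<bar>)"
  using assms
proof
  assume m: "mono_on {a..b} f"
  show ?thesis using mono_meas[OF m] m by (auto simp: mono_on_def) (smt (verit) atLeastAtMost_iff order_refl)
next
  assume m: "antimono_on {a..b} f"
  have m2: "mono_on {a..b} (\<lambda>t. - f t)" using m by (auto simp: monotone_on_def)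
  have "(\<lambda>t. - (- f t)) \<in> borel_measurable (lebesgue_on {a..b})"
    using mono_meas[OF m2] by measurable
  then show ?thesis using m by (auto simp: monotone_on_def) (smt (verit) atLeastAtMost_iff order_refl)
qed

lemma pi_int:
  fixes \<tau> :: "nat \<Rightarrow> real" and \<pi> g :: "real \<Rightarrow> real"
  assumes tau: "\<forall>j\<in>{1..M}. \<tau> (j - 1) < \<tau> j" and t0: "\<tau> 0 = 0" and tM: "\<tau> M = T"
    and pim: "\<forall>j\<in>{1..M}. mono_on {\<tau> (j - 1)..\<tau> j} \<pi> \<or> antimono_on {\<tau> (j - 1)..\<tau> j} \<pi>"
    and g: "g \<in> borel_measurable (lebesgue_on {0..T})" "\<forall>t\<in>{0..T}. \<bar>g t\<bar> \<le> B"
  shows "(\<lambda>t. \<pi> t * g t) integrable_on {0..T}"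
proof -
  have "j \<le> M \<Longrightarrow> (\<lambda>t. \<pi> t * g t) integrable_on {0..\<tau> j}" for j
  proof (induction j)
    case 0 then show ?case using t0 using integrable_on_refl[of _ "0::real"] by simp
  next
    case (Suc j)
    let ?a = "\<tau> j" and ?b = "\<tau> (Suc j)"
    have a0: "0 \<le> ?a" using tau_mono[OF tau, of 0 j] Suc.prems t0 by simp
    have bT: "?b \<le> T" using tau_mono[OF tau, of "Suc j" M] Suc.prems tM by simp
    have ab: "?a \<le> ?b" using tau_mono[OF tau, of j "Suc j"] Suc.prems by simp
    have pm: "mono_on {?a..?b} \<pi> \<or> antimono_on {?a..?b} \<pi>"
      using pim Suc.prems by (metis atLeastAtMost_iff diff_Suc_1 le_add1 plus_1_eq_Suc)
    note pp = piece_meas[OF pm]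
    have sub: "{?a..?b} \<subseteq> {0..T}" using a0 bT by auto
    have gm: "g \<in> borel_measurable (lebesgue_on {?a..?b})"
      by (rule measurable_restrict_mono[OF g(1) sub])
    have "(\<lambda>t. \<pi> t * g t) \<in> borel_measurable (lebesgue_on {?a..?b})"
      using pp gm by (intro borel_measurable_times) auto
    moreover have "\<forall>t\<in>{?a..?b}. \<bar>\<pi> t * g t\<bar> \<le> (\<bar>\<pi> ?a\<bar> + \<bar>\<pi> ?b\<bar>) * B"
    proof
      fix t assume t: "t \<in> {?a..?b}"
      have "\<bar>\<pi> t * g t\<bar> = \<bar>\<pi> t\<bar> * \<bar>g t\<bar>" by (simp add: abs_mult)
      also have "\<dots> \<le> (\<bar>\<pi> ?a\<bar> + \<bar>\<pi> ?b\<bar>) * B"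
        using pp t g(2) sub by (intro mult_mono) auto
      finally show "\<bar>\<pi> t * g t\<bar> \<le> (\<bar>\<pi> ?a\<bar> + \<bar>\<pi> ?b\<bar>) * B" .
    qed
    ultimately have "(\<lambda>t. \<pi> t * g t) integrable_on {?a..?b}" by (rule bdd_int)
    moreover have "(\<lambda>t. \<pi> t * g t) integrable_on {0..?a}" using Suc by simp
    ultimately show ?case using Henstock_Kurzweil_Integration.integrable_combine[OF a0 ab] by blast
  qed
  from this[of M] tM show ?thesis by simp
qed

lemma ereal_conv:
  fixes F :: ereal and f g :: "'a \<Rightarrow> real" and lam mu :: real
  assumes lam: "lam > 0" and mu: "mu > 0"
    and H: "\<forall>x\<in>S1. \<forall>y\<in>S2. F \<le> ereal (lam * f x + mu * g y)"
  shows "F \<le> ereal lam * (INF x\<in>S1. ereal (f x)) + ereal mu * (INF y\<in>S2. ereal (g y))"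
proof (cases "S1 = {} \<or> S2 = {}")
  case True
  then show ?thesis using lam mu by (auto simp: top_ereal_def)
next
  case False
  then obtain x0 y0 where x0: "x0 \<in> S1" and y0: "y0 \<in> S2" by blast
  define I1 where "I1 = (INF x\<in>S1. ereal (f x))"
  define I2 where "I2 = (INF y\<in>S2. ereal (g y))"
  have I1ne: "I1 \<noteq> \<infinity>" proof -
    have "I1 \<le> ereal (f x0)" unfolding I1_def using x0 by (rule INF_lower)
    then show ?thesis by auto
  qed
  have I2ne: "I2 \<noteq> \<infinity>" proof -
    have "I2 \<le> ereal (g y0)" unfolding I2_def using y0 by (rule INF_lower)
    then show ?thesis by auto
  qed
  have key: "F \<le> ereal y" if "ereal lam * I1 + ereal mu * I2 < ereal y" for y
  proof -
    have "\<exists>x\<in>S1. \<exists>z\<in>S2. lam * f x + mu * g z < y"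
    proof (cases I1)
      case (real p)
      show ?thesis
      proof (cases I2)
        case (real q)
        define d where "d = y - lam * p - mu * q"
        have d: "d > 0" using that real \<open>I1 = ereal p\<close> by (simp add: d_def)
        have "I1 < ereal (p + d / (2 * lam))" using real \<open>I1 = ereal p\<close> d lam by simp
        then obtain x where x: "x \<in> S1" "f x < p + d / (2 * lam)"
          unfolding I1_def by (auto simp: INF_less_iff)
        have "I2 < ereal (q + d / (2 * mu))" using real d mu by simp
        then obtain z where z: "z \<in> S2" "g z < q + d / (2 * mu)"
          unfolding I2_def by (auto simp: INF_less_iff)
        have "lam * f x < lam * (p + d / (2 * lam))" using x lam by simp
        moreover have "mu * g z < mu * (q + d / (2 * mu))" using z mu by simp
        moreover have "lam * (p + d / (2 * lam)) = lam * p + d / 2" using lam by (simp add: field_simps)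
        moreover have "mu * (q + d / (2 * mu)) = mu * q + d / 2" using mu by (simp add: field_simps)
        ultimately have "lam * f x + mu * g z < y" using d_def by linarith
        then show ?thesis using x z by blast
      next
        case PInf then show ?thesis using I2ne by simp
      next
        case MInf
        have "I2 < ereal ((y - lam * f x0) / mu)" using MInf by simp
        then obtain z where z: "z \<in> S2" "g z < (y - lam * f x0) / mu"
          unfolding I2_def by (auto simp: INF_less_iff)
        have "mu * g z < y - lam * f x0" using z mu by (simp add: field_simps)
        then show ?thesis using x0 z by force
      qed
    next
      case PInf then show ?thesis using I1ne by simp
    next
      case MInf
      have "I1 < ereal ((y - mu * g y0) / lam)" using MInf by simp
      then obtain x where x: "x \<in> S1" "f x < (y - mu * g y0) / lam"
        unfolding I1_def by (auto simp: INF_less_iff)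
      have "lam * f x < y - mu * g y0" using x lam by (simp add: field_simps)
      then show ?thesis using y0 x by force
    qed
    then obtain x z where "x \<in> S1" "z \<in> S2" "lam * f x + mu * g z < y" by blast
    then show ?thesis using H by (metis ereal_less_eq(3) less_imp_le order_trans)
  qed
  show ?thesis unfolding I1_def[symmetric] I2_def[symmetric]
  proof (rule dense_ge)
    fix z assume z: "ereal lam * I1 + ereal mu * I2 < z"
    show "F \<le> z"
    proof (cases z)
      case (real r) then show ?thesis using key z by simp
    qed (use z in auto)
  qed
qed

lemma int_cmul: "f integrable_on S \<Longrightarrow> (\<lambda>x. c * f x :: real) integrable_on S"
  using integrable_cmul[of f S c] by simp

lemma integral_cmul_real: "integral S (\<lambda>x. c * f x :: real) = c * integral S f"
  using integral_cmul[of S c f] by simp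

lemma conv_bounds:
  fixes a b lam L U :: real
  assumes "L \<le> a" "a \<le> U" "L \<le> b" "b \<le> U" "0 \<le> lam" "lam \<le> 1"
  shows "L \<le> lam * a + (1 - lam) * b \<and> lam * a + (1 - lam) * b \<le> U"
proof -
  have "lam * L \<le> lam * a" "lam * a \<le> lam * U" using assms by (auto intro: mult_left_mono)
  moreover have "(1 - lam) * L \<le> (1 - lam) * b" "(1 - lam) * b \<le> (1 - lam) * U"
    using assms by (auto intro: mult_left_mono)
  ultimately show ?thesis by (simp add: algebra_simps)
qed

lemma comb:
  fixes \<tau> :: "nat \<Rightarrow> real" and \<pi> :: "real \<Rightarrow> real"
  assumes tau: "\<forall>j\<in>{1..M}. \<tau> (j - 1) < \<tau> j" and t0: "\<tau> 0 = 0" and tM: "\<tau> M = T"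
    and pim: "\<forall>j\<in>{1..M}. mono_on {\<tau> (j - 1)..\<tau> j} \<pi> \<or> antimono_on {\<tau> (j - 1)..\<tau> j} \<pi>"
    and lam: "0 \<le> lam" "lam \<le> 1"
    and f1: "feasible N M T \<alpha> \<beta> xh L U x0 \<tau> E1 u1"
    and f2: "feasible N M T \<alpha> \<beta> xh L U x0 \<tau> E2 u2"
  shows "feasible N M T \<alpha> \<beta> xh L U x0 \<tau> (\<lambda>j. lam * E1 j + (1 - lam) * E2 j)
            (\<lambda>i t. lam * u1 i t + (1 - lam) * u2 i t)
       \<and> cost N T \<pi> (\<lambda>i t. lam * u1 i t + (1 - lam) * u2 i t)
           = lam * cost N T \<pi> u1 + (1 - lam) * cost N T \<pi> u2"
proof -
  define uc where "uc = (\<lambda>i t. lam * u1 i t + (1 - lam) * u2 i t)"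
  have F1: "\<forall>i\<in>{1..N}. u1 i \<in> borel_measurable (lebesgue_on {0..T})
      \<and> (\<forall>t\<in>{0..T}. 0 \<le> u1 i t \<and> u1 i t \<le> 1)
      \<and> (\<exists>x :: real \<Rightarrow> real. continuous_on {0..T} x
           \<and> (\<forall>t\<in>{0..T}. x t = x0 i + integral {0..t} (\<lambda>s. - \<alpha> * (x s - xh) - \<beta> * u1 i s))
           \<and> (\<forall>t\<in>{0..T}. L \<le> x t \<and> x t \<le> U))"
    and F1e: "\<forall>j\<in>{1..M}. integral {0..\<tau> j} (\<lambda>t. \<Sum>i=1..N. u1 i t) = (\<Sum>k=1..j. E1 k)"
    using f1 unfolding feasible_def by auto
  have F2: "\<forall>i\<in>{1..N}. u2 i \<in> borel_measurable (lebesgue_on {0..T})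
      \<and> (\<forall>t\<in>{0..T}. 0 \<le> u2 i t \<and> u2 i t \<le> 1)
      \<and> (\<exists>x :: real \<Rightarrow> real. continuous_on {0..T} x
           \<and> (\<forall>t\<in>{0..T}. x t = x0 i + integral {0..t} (\<lambda>s. - \<alpha> * (x s - xh) - \<beta> * u2 i s))
           \<and> (\<forall>t\<in>{0..T}. L \<le> x t \<and> x t \<le> U))"
    and F2e: "\<forall>j\<in>{1..M}. integral {0..\<tau> j} (\<lambda>t. \<Sum>i=1..N. u2 i t) = (\<Sum>k=1..j. E2 k)"
    using f2 unfolding feasible_def by auto
  have uint1: "u1 i integrable_on {0..T}" if "i \<in> {1..N}" for i
    using F1 that by (intro bdd_int[where B=1]) auto
  have uint2: "u2 i integrable_on {0..T}" if "i \<in> {1..N}" for i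
    using F2 that by (intro bdd_int[where B=1]) auto
  have part1: "\<forall>i\<in>{1..N}. uc i \<in> borel_measurable (lebesgue_on {0..T})
      \<and> (\<forall>t\<in>{0..T}. 0 \<le> uc i t \<and> uc i t \<le> 1)
      \<and> (\<exists>x :: real \<Rightarrow> real. continuous_on {0..T} x
           \<and> (\<forall>t\<in>{0..T}. x t = x0 i + integral {0..t} (\<lambda>s. - \<alpha> * (x s - xh) - \<beta> * uc i s))
           \<and> (\<forall>t\<in>{0..T}. L \<le> x t \<and> x t \<le> U))"
  proof
    fix i assume i: "i \<in> {1..N}"
    obtain x1 where x1: "continuous_on {0..T} x1"
           "\<forall>t\<in>{0..T}. x1 t = x0 i + integral {0..t} (\<lambda>s. - \<alpha> * (x1 s - xh) - \<beta> * u1 i s)"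
           "\<forall>t\<in>{0..T}. L \<le> x1 t \<and> x1 t \<le> U" using F1 i by blast
    obtain x2 where x2: "continuous_on {0..T} x2"
           "\<forall>t\<in>{0..T}. x2 t = x0 i + integral {0..t} (\<lambda>s. - \<alpha> * (x2 s - xh) - \<beta> * u2 i s)"
           "\<forall>t\<in>{0..T}. L \<le> x2 t \<and> x2 t \<le> U" using F2 i by blast
    define xc where "xc = (\<lambda>s. lam * x1 s + (1 - lam) * x2 s)"
    have m: "uc i \<in> borel_measurable (lebesgue_on {0..T})"
      using F1 F2 i unfolding uc_def by (intro borel_measurable_add borel_measurable_times borel_measurable_const) auto
    have b: "\<forall>t\<in>{0..T}. 0 \<le> uc i t \<and> uc i t \<le> 1"
      using F1 F2 i lam unfolding uc_def by (intro ballI conv_bounds) auto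
    have xcc: "continuous_on {0..T} xc" unfolding xc_def using x1(1) x2(1) by (intro continuous_intros)
    have xcb: "\<forall>t\<in>{0..T}. L \<le> xc t \<and> xc t \<le> U"
      using x1(3) x2(3) lam unfolding xc_def by (intro ballI conv_bounds) auto
    have xce: "xc t = x0 i + integral {0..t} (\<lambda>s. - \<alpha> * (xc s - xh) - \<beta> * uc i s)" if t: "t \<in> {0..T}" for t
    proof -
      have sub: "{0..t} \<subseteq> {0..T}" using t by auto
      have h1: "(\<lambda>s. - \<alpha> * (x1 s - xh) - \<beta> * u1 i s) integrable_on {0..t}"
        by (intro integrable_diff int_cmul integrable_on_subinterval[OF uint1[OF i] sub]
             integrable_continuous_interval continuous_on_subset[OF x1(1) sub] integrable_const_ivl)
      have h2: "(\<lambda>s. - \<alpha> * (x2 s - xh) - \<beta> * u2 i s) integrable_on {0..t}"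
        by (intro integrable_diff int_cmul integrable_on_subinterval[OF uint2[OF i] sub]
             integrable_continuous_interval continuous_on_subset[OF x2(1) sub] integrable_const_ivl)
      have "integral {0..t} (\<lambda>s. - \<alpha> * (xc s - xh) - \<beta> * uc i s)
          = integral {0..t} (\<lambda>s. lam * (- \<alpha> * (x1 s - xh) - \<beta> * u1 i s) + (1 - lam) * (- \<alpha> * (x2 s - xh) - \<beta> * u2 i s))"
        unfolding xc_def uc_def by (rule integral_cong) (simp add: algebra_simps)
      also have "\<dots> = lam * integral {0..t} (\<lambda>s. - \<alpha> * (x1 s - xh) - \<beta> * u1 i s)
                     + (1 - lam) * integral {0..t} (\<lambda>s. - \<alpha> * (x2 s - xh) - \<beta> * u2 i s)"
        using h1 h2 by (simp add: integral_add int_cmul integral_cmul_real)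
      also have "\<dots> = lam * (x1 t - x0 i) + (1 - lam) * (x2 t - x0 i)"
        using x1(2) x2(2) t by simp
      finally show ?thesis unfolding xc_def by (simp add: algebra_simps)
    qed
    show "uc i \<in> borel_measurable (lebesgue_on {0..T})
      \<and> (\<forall>t\<in>{0..T}. 0 \<le> uc i t \<and> uc i t \<le> 1)
      \<and> (\<exists>x :: real \<Rightarrow> real. continuous_on {0..T} x
           \<and> (\<forall>t\<in>{0..T}. x t = x0 i + integral {0..t} (\<lambda>s. - \<alpha> * (x s - xh) - \<beta> * uc i s))
           \<and> (\<forall>t\<in>{0..T}. L \<le> x t \<and> x t \<le> U))"
      using m b xcc xcb xce by blast
  qed
  have S1int: "(\<lambda>t. \<Sum>i=1..N. u1 i t) integrable_on {0..T}"
    using uint1 by (intro integrable_sum) auto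
  have S2int: "(\<lambda>t. \<Sum>i=1..N. u2 i t) integrable_on {0..T}"
    using uint2 by (intro integrable_sum) auto
  have Ssplit: "(\<Sum>i=1..N. uc i t) = lam * (\<Sum>i=1..N. u1 i t) + (1 - lam) * (\<Sum>i=1..N. u2 i t)" for t
    unfolding uc_def by (simp add: sum.distrib sum_distrib_left)
  have part2: "\<forall>j\<in>{1..M}. integral {0..\<tau> j} (\<lambda>t. \<Sum>i=1..N. uc i t) = (\<Sum>k=1..j. lam * E1 k + (1 - lam) * E2 k)"
  proof
    fix j assume j: "j \<in> {1..M}"
    have "\<tau> j \<le> T" using tau_mono[OF tau, of j M] j tM by simp
    then have sub: "{0..\<tau> j} \<subseteq> {0..T}" by auto
    have "integral {0..\<tau> j} (\<lambda>t. \<Sum>i=1..N. uc i t)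
        = integral {0..\<tau> j} (\<lambda>t. lam * (\<Sum>i=1..N. u1 i t) + (1 - lam) * (\<Sum>i=1..N. u2 i t))"
      unfolding Ssplit ..
    also have "\<dots> = lam * integral {0..\<tau> j} (\<lambda>t. \<Sum>i=1..N. u1 i t) + (1 - lam) * integral {0..\<tau> j} (\<lambda>t. \<Sum>i=1..N. u2 i t)"
      using integrable_on_subinterval[OF S1int sub] integrable_on_subinterval[OF S2int sub]
      by (simp add: integral_add int_cmul integral_cmul_real)
    also have "\<dots> = (\<Sum>k=1..j. lam * E1 k + (1 - lam) * E2 k)"
      using F1e F2e j by (simp add: sum.distrib sum_distrib_left)
    finally show "integral {0..\<tau> j} (\<lambda>t. \<Sum>i=1..N. uc i t) = (\<Sum>k=1..j. lam * E1 k + (1 - lam) * E2 k)" .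
  qed
  have piS1: "(\<lambda>t. \<pi> t * (\<Sum>i=1..N. u1 i t)) integrable_on {0..T}"
  proof (rule pi_int[OF tau t0 tM pim, where B="real N"])
    show "(\<lambda>t. \<Sum>i=1..N. u1 i t) \<in> borel_measurable (lebesgue_on {0..T})"
      using F1 by (intro borel_measurable_sum) auto
    show "\<forall>t\<in>{0..T}. \<bar>\<Sum>i=1..N. u1 i t\<bar> \<le> real N"
    proof
      fix t assume t: "t \<in> {0..T}"
      have "0 \<le> (\<Sum>i=1..N. u1 i t)" using F1 t by (intro sum_nonneg) auto
      moreover have "(\<Sum>i=1..N. u1 i t) \<le> real (card {1..N}) * 1"
        using F1 t by (intro sum_bounded_above) auto
      ultimately show "\<bar>\<Sum>i=1..N. u1 i t\<bar> \<le> real N" by simp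
    qed
  qed
  have piS2: "(\<lambda>t. \<pi> t * (\<Sum>i=1..N. u2 i t)) integrable_on {0..T}"
  proof (rule pi_int[OF tau t0 tM pim, where B="real N"])
    show "(\<lambda>t. \<Sum>i=1..N. u2 i t) \<in> borel_measurable (lebesgue_on {0..T})"
      using F2 by (intro borel_measurable_sum) auto
    show "\<forall>t\<in>{0..T}. \<bar>\<Sum>i=1..N. u2 i t\<bar> \<le> real N"
    proof
      fix t assume t: "t \<in> {0..T}"
      have "0 \<le> (\<Sum>i=1..N. u2 i t)" using F2 t by (intro sum_nonneg) auto
      moreover have "(\<Sum>i=1..N. u2 i t) \<le> real (card {1..N}) * 1"
        using F2 t by (intro sum_bounded_above) auto
      ultimately show "\<bar>\<Sum>i=1..N. u2 i t\<bar> \<le> real N" by simp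
    qed
  qed
  have part3: "cost N T \<pi> uc = lam * cost N T \<pi> u1 + (1 - lam) * cost N T \<pi> u2"
  proof -
    have "cost N T \<pi> uc = integral {0..T} (\<lambda>t. lam * (\<pi> t * (\<Sum>i=1..N. u1 i t)) + (1 - lam) * (\<pi> t * (\<Sum>i=1..N. u2 i t)))"
      unfolding cost_def Ssplit by (simp add: algebra_simps)
    also have "\<dots> = lam * cost N T \<pi> u1 + (1 - lam) * cost N T \<pi> u2"
      unfolding cost_def using piS1 piS2 by (simp add: integral_add int_cmul integral_cmul_real)
    finally show ?thesis .
  qed
  show ?thesis using part1 part2 part3 unfolding feasible_def uc_def by simp
qed


theorem proposition3:
  fixes N M :: nat and T Etot \<alpha> \<beta> L U xh :: real
    and x0 :: "nat \<Rightarrow> real" and \<pi> :: "real \<Rightarrow> real" and \<tau> :: "nat \<Rightarrow> real" and lam :: real and E1 E2 :: "nat \<Rightarrow> real"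
  assumes "N \<ge> 1" and "M \<ge> 1" and "T > 0" and "Etot > 0" and "\<alpha> > 0" and "L < U"
    and "\<forall>i\<in>{1..N}. L \<le> x0 i \<and> x0 i \<le> U"
    and "xh > U"
    and "\<tau> 0 = 0" and "\<tau> M = T" and "\<forall>j\<in>{1..M}. \<tau> (j - 1) < \<tau> j"
    and "\<forall>j\<in>{1..M}. mono_on {\<tau> (j - 1)..\<tau> j} \<pi> \<or> antimono_on {\<tau> (j - 1)..\<tau> j} \<pi>"
    and "0 \<le> lam" and "lam \<le> 1"
    and "E1 \<in> Adm N M Etot \<alpha> \<beta> xh L U \<tau>" and "E2 \<in> Adm N M Etot \<alpha> \<beta> xh L U \<tau>"
  shows "Vopt N M T \<alpha> \<beta> xh L U x0 \<pi> \<tau> (\<lambda>j. lam * E1 j + (1 - lam) * E2 j)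
         \<le> ereal lam * Vopt N M T \<alpha> \<beta> xh L U x0 \<pi> \<tau> E1
           + ereal (1 - lam) * Vopt N M T \<alpha> \<beta> xh L U x0 \<pi> \<tau> E2"
proof -
  consider "lam = 0" | "lam = 1" | "0 < lam \<and> lam < 1" using assms(13,14) by linarith
  then show ?thesis
  proof cases
    case 1
    then have "(\<lambda>j. lam * E1 j + (1 - lam) * E2 j) = E2" by auto
    then show ?thesis using 1 by (simp add: zero_ereal_def[symmetric])
  next
    case 2
    then have "(\<lambda>j. lam * E1 j + (1 - lam) * E2 j) = E1" by auto
    then show ?thesis using 2 by (simp add: zero_ereal_def[symmetric] one_ereal_def[symmetric])
  next
    case 3
    show ?thesis unfolding Vopt_def
    proof (rule ereal_conv)
      show "0 < lam" "0 < 1 - lam" using 3 by auto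
      show "\<forall>x\<in>{u. feasible N M T \<alpha> \<beta> xh L U x0 \<tau> E1 u}. \<forall>y\<in>{u. feasible N M T \<alpha> \<beta> xh L U x0 \<tau> E2 u}.
        (INF u\<in>{u. feasible N M T \<alpha> \<beta> xh L U x0 \<tau> (\<lambda>j. lam * E1 j + (1 - lam) * E2 j) u}. ereal (cost N T \<pi> u))
         \<le> ereal (lam * cost N T \<pi> x + (1 - lam) * cost N T \<pi> y)"
      proof (intro ballI)
        fix u1 u2
        assume "u1 \<in> {u. feasible N M T \<alpha> \<beta> xh L U x0 \<tau> E1 u}" "u2 \<in> {u. feasible N M T \<alpha> \<beta> xh L U x0 \<tau> E2 u}"
        then have c: "feasible N M T \<alpha> \<beta> xh L U x0 \<tau> (\<lambda>j. lam * E1 j + (1 - lam) * E2 j)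
            (\<lambda>i t. lam * u1 i t + (1 - lam) * u2 i t)
       \<and> cost N T \<pi> (\<lambda>i t. lam * u1 i t + (1 - lam) * u2 i t)
           = lam * cost N T \<pi> u1 + (1 - lam) * cost N T \<pi> u2"
          using assms(9-14) by (intro comb) auto
        show "(INF u\<in>{u. feasible N M T \<alpha> \<beta> xh L U x0 \<tau> (\<lambda>j. lam * E1 j + (1 - lam) * E2 j) u}. ereal (cost N T \<pi> u))
         \<le> ereal (lam * cost N T \<pi> u1 + (1 - lam) * cost N T \<pi> u2)"
          using c by (metis (no_types, lifting) INF_lower mem_Collect_eq)
      qed
    qed
  qed
qed

end
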